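(* With $\mathbb P$-probability one, the sequence of probability measures $Q_t^\omega$, $t=1,2,\dots$, on $\mathbb R^{N^2+N}$ is exponentially tight, i.e., for every $M<\infty$ there is a compact $K\subseteq\mathbb R^{N^2+N}$ with $\limsup_{t\to\infty}\frac1t\log Q_t^\omega(K^c)\le-M$.
   Context: $V=\{1,\dots,N\}$; $P$ row-stochastic irreducible aperiodic with stationary distribution $\pi>0$. $\mathcal S^t=\{s^t\in V^t:\pi_{s_1}\prod_{k<t}P_{s_ks_{k+1}}>0\}$, $C_t=|\mathcal S^t|$. $K_{ij}(s^t)=|\{1\le k\le t:s_k=i,s_{k+1}=j\}|$ with $s_{t+1}:=s_1$, $\Theta_t(s^t)=K(s^t)/t$. On $(\Omega,\mathcal F,\mathbb P)$, for each $t$ and $s^t\in\mathcal S^t$, $Z_{s^t}\in\mathbb R^t$ has i.i.d. $\mathcal N(0,1)$ entries, all these vectors (over all $s^t$, all $t$) mutually independent. $\mathcal Z^\omega_{t,i}(s^t)=\frac1t\sum_{k\le t:s_k=i}Z_{s^t,k}(\omega)$ ($0$ if the sum is empty). $Q_t^\omega(B)=\frac1{C_t}|\{s^t\in\mathcal S^t:(\Theta_t(s^t),\mathcal Z_t^\omega(s^t))\in B\}|$. *)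

theory Defs
  imports "HOL-Probability.Probability"
begin

text \<open>The state space V is the finite type 'v (N = CARD('v)); P :: 'v => 'v => real.\<close>

fun mpow :: "('v::finite \<Rightarrow> 'v \<Rightarrow> real) \<Rightarrow> nat \<Rightarrow> 'v \<Rightarrow> 'v \<Rightarrow> real" where
  "mpow P 0 i j = (if i = j then 1 else 0)"
| "mpow P (Suc n) i j = (\<Sum>k\<in>UNIV. mpow P n i k * P k j)"

definition row_stochastic :: "('v::finite \<Rightarrow> 'v \<Rightarrow> real) \<Rightarrow> bool" where
  "row_stochastic P \<longleftrightarrow> (\<forall>i j. P i j \<ge> 0) \<and> (\<forall>i. (\<Sum>j\<in>UNIV. P i j) = 1)"

definition irreducible_chain :: "('v::finite \<Rightarrow> 'v \<Rightarrow> real) \<Rightarrow> bool" where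
  "irreducible_chain P \<longleftrightarrow> (\<forall>i j. \<exists>n>0. mpow P n i j > 0)"

definition aperiodic_chain :: "('v::finite \<Rightarrow> 'v \<Rightarrow> real) \<Rightarrow> bool" where
  "aperiodic_chain P \<longleftrightarrow> (\<forall>i. Gcd {n::nat. n > 0 \<and> mpow P n i i > 0} = 1)"

definition stationary_dist :: "('v::finite \<Rightarrow> 'v \<Rightarrow> real) \<Rightarrow> ('v \<Rightarrow> real) \<Rightarrow> bool" where
  "stationary_dist P \<pi> \<longleftrightarrow> (\<forall>i. \<pi> i \<ge> 0) \<and> (\<Sum>i\<in>UNIV. \<pi> i) = 1
      \<and> (\<forall>j. (\<Sum>i\<in>UNIV. \<pi> i * P i j) = \<pi> j)"

text \<open>Admissible paths of length t (0-based list indices: s!0 = s_1, ..., s!(t-1) = s_t).\<close>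
definition paths :: "('v::finite \<Rightarrow> 'v \<Rightarrow> real) \<Rightarrow> ('v \<Rightarrow> real) \<Rightarrow> nat \<Rightarrow> 'v list set" where
  "paths P \<pi> t = {s. length s = t \<and> \<pi> (s!0) * (\<Prod>k<t - 1. P (s!k) (s!(k+1))) > 0}"

text \<open>Cyclic pair counts K_ij(s) (with s_{t+1} := s_1) and empirical pair measure Theta_t.\<close>
definition pair_count :: "'v list \<Rightarrow> 'v \<Rightarrow> 'v \<Rightarrow> nat" where
  "pair_count s i j = card {k. k < length s \<and> s!k = i \<and> s!((k+1) mod length s) = j}"

definition Theta :: "'v::finite list \<Rightarrow> real^('v \<times> 'v)" where
  "Theta s = (\<chi> ij. real (pair_count s (fst ij) (snd ij)) / real (length s))"

text \<open>\<Z>_{t,i}(s) = (1/t) \<Sum>_{k : s_k = i} Z_{s,k}(\<omega>); Z t s k is the k-th (0-based) entry of Z_{s^t}.\<close>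
definition Zemp :: "(nat \<Rightarrow> 'v list \<Rightarrow> nat \<Rightarrow> 'a \<Rightarrow> real) \<Rightarrow> 'a \<Rightarrow> 'v::finite list \<Rightarrow> real^'v" where
  "Zemp Z \<omega> s = (\<chi> i. (\<Sum>k\<in>{k. k < length s \<and> s!k = i}. Z (length s) s k \<omega>) / real (length s))"

definition Qemp :: "('v::finite \<Rightarrow> 'v \<Rightarrow> real) \<Rightarrow> ('v \<Rightarrow> real) \<Rightarrow> (nat \<Rightarrow> 'v list \<Rightarrow> nat \<Rightarrow> 'a \<Rightarrow> real)
     \<Rightarrow> nat \<Rightarrow> 'a \<Rightarrow> ((real^('v \<times> 'v)) \<times> (real^'v)) set \<Rightarrow> real" where
  "Qemp P \<pi> Z t \<omega> B = real (card {s \<in> paths P \<pi> t. (Theta s, Zemp Z \<omega> s) \<in> B}) / real (card (paths P \<pi> t))"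

definition eln :: "real \<Rightarrow> ereal" where
  "eln x = (if x = 0 then -\<infinity> else ereal (ln x))"

end

theory Submission
  imports Defs
begin


lemma nn_integral_normal_density_one: "(\<integral>\<^sup>+x. ennreal (normal_density \<mu> 1 x) \<partial>lborel) = 1"
proof -
  have "(\<integral>\<^sup>+x. ennreal (normal_density \<mu> 1 x) \<partial>lborel) = ennreal (\<integral>x. normal_density \<mu> 1 x \<partial>lborel)"
    by (rule nn_integral_eq_integral) auto
  then show ?thesis by simp
qed

lemma gauss_shift: "std_normal_density x * exp (a * x) = exp (a^2/2) * normal_density a 1 x"
  unfolding normal_density_def
  by (simp add: mult_exp_exp power2_eq_square field_simps)

lemma gauss_exp_abs:
  assumes D: "distributed M lborel X std_normal_density"
  shows "(\<integral>\<^sup>+\<omega>. ennreal (exp \<bar>X \<omega>\<bar>) \<partial>M) \<le> ennreal (2 * exp (1/2))"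
proof -
  have "(\<integral>\<^sup>+\<omega>. ennreal (exp \<bar>X \<omega>\<bar>) \<partial>M) = (\<integral>\<^sup>+x. ennreal (std_normal_density x) * ennreal (exp \<bar>x\<bar>) \<partial>lborel)"
    using distributed_nn_integral[OF D, of "\<lambda>x. ennreal (exp \<bar>x\<bar>)"] by simp
  also have "\<dots> \<le> (\<integral>\<^sup>+x. ennreal (exp (1/2) * normal_density 1 1 x) + ennreal (exp (1/2) * normal_density (-1) 1 x) \<partial>lborel)"
  proof (rule nn_integral_mono)
    fix x
    have "std_normal_density x * exp \<bar>x\<bar> \<le> std_normal_density x * exp (1 * x) + std_normal_density x * exp ((-1) * x)"
      by (cases "x \<ge> 0") (auto simp: distrib_left[symmetric] intro!: mult_left_mono)
    also have "\<dots> = exp (1/2) * normal_density 1 1 x + exp (1/2) * normal_density (-1) 1 x"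
      unfolding gauss_shift by simp
    finally show "ennreal (std_normal_density x) * ennreal (exp \<bar>x\<bar>) \<le> ennreal (exp (1/2) * normal_density 1 1 x) + ennreal (exp (1/2) * normal_density (-1) 1 x)"
      by (simp add: ennreal_mult[symmetric] ennreal_plus[symmetric] del: ennreal_plus)
  qed
  also have "\<dots> = (\<integral>\<^sup>+x. ennreal (exp (1/2)) * ennreal (normal_density 1 1 x) \<partial>lborel) + (\<integral>\<^sup>+x. ennreal (exp (1/2)) * ennreal (normal_density (-1) 1 x) \<partial>lborel)"
    by (subst nn_integral_add) (auto simp: ennreal_mult)
  also have "\<dots> = ennreal (2 * exp (1/2))"
  proof -
    have "(\<integral>\<^sup>+x. ennreal (exp (1/2)) * ennreal (normal_density \<mu> 1 x) \<partial>lborel) = ennreal (exp (1/2))" for \<mu>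
      by (subst nn_integral_cmult) (auto simp: nn_integral_normal_density_one)
    then show ?thesis by (simp del: ennreal_plus add: ennreal_plus[symmetric])
  qed
  finally show ?thesis .
qed

lemma (in prob_space) gauss_tail:
  assumes fin: "finite I" and ind: "indep_vars (\<lambda>_. borel) X I"
    and D: "\<And>i. i \<in> I \<Longrightarrow> distributed M lborel (X i) std_normal_density"
  shows "emeasure M {\<omega>\<in>space M. a \<le> (\<Sum>i\<in>I. \<bar>X i \<omega>\<bar>)} \<le> ennreal (exp (-a) * (2 * exp (1/2)) ^ card I)"
proof -
  have meas[measurable]: "\<And>i. i \<in> I \<Longrightarrow> X i \<in> borel_measurable M"
    using D distributed_measurable by (metis measurable_lborel1)
  have "(\<lambda>x. (\<Sum>i\<in>I. \<bar>X i x\<bar>) * indicator (space M) x) \<in> borel_measurable M"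
    using meas by (intro borel_measurable_times borel_measurable_sum borel_measurable_abs) auto
  then have "emeasure M {\<omega>\<in>space M. a \<le> (\<Sum>i\<in>I. \<bar>X i \<omega>\<bar>)} \<le>
     ennreal (exp (-1 * a)) * (\<integral>\<^sup>+x. ennreal (exp (1 * (\<Sum>i\<in>I. \<bar>X i x\<bar>))) * indicator (space M) x \<partial>M)"
    by (intro Chernoff_ineq_nn_integral_ge) auto
  also have "(\<integral>\<^sup>+x. ennreal (exp (1 * (\<Sum>i\<in>I. \<bar>X i x\<bar>))) * indicator (space M) x \<partial>M)
      = (\<integral>\<^sup>+x. (\<Prod>i\<in>I. ennreal (exp \<bar>X i x\<bar>)) \<partial>M)"
    by (intro nn_integral_cong) (simp add: exp_sum fin prod_ennreal)
  also have "\<dots> = (\<Prod>i\<in>I. \<integral>\<^sup>+x. ennreal (exp \<bar>X i x\<bar>) \<partial>M)"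
    by (intro indep_vars_nn_integral fin indep_vars_compose2[OF ind]) auto
  also have "\<dots> \<le> (\<Prod>i\<in>I. ennreal (2 * exp (1/2)))"
    by (intro prod_mono_ennreal gauss_exp_abs D)
  also have "ennreal (exp (-1 * a)) * \<dots> = ennreal (exp (-a) * (2 * exp (1/2)) ^ card I)"
    by (simp add: prod_ennreal ennreal_power ennreal_mult power_mult_distrib del: ennreal_mult_le_mult_iff) (simp add: ennreal_power[symmetric])
  finally show ?thesis by (simp add: mult_left_mono)
qed


lemma finite_paths: "finite (paths P \<pi> t)"
  by (rule finite_subset[OF _ finite_lists_length_eq[of "UNIV::'v::finite set" t]]) (auto simp: paths_def)

lemma card_paths: fixes P :: "'v::finite \<Rightarrow> 'v \<Rightarrow> real" shows "card (paths P \<pi> t) \<le> CARD('v::finite) ^ t"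
proof -
  have "card (paths P \<pi> t) \<le> card {xs. set xs \<subseteq> (UNIV::'v set) \<and> length xs = t}"
  proof (rule card_mono)
    show "finite {xs. set xs \<subseteq> (UNIV::'v set) \<and> length xs = t}"
      by (rule finite_lists_length_eq) simp
  qed (auto simp: paths_def)
  then show ?thesis using card_lists_length_eq[of "UNIV::'v set" t] by simp
qed

lemma Theta_bound: "\<bar>Theta s $ ij\<bar> \<le> 1"
proof -
  have "pair_count s (fst ij) (snd ij) \<le> length s"
    unfolding pair_count_def by (rule order.trans[OF card_mono[of "{..<length s}"]]) auto
  then show ?thesis unfolding Theta_def
    by (cases "length s = 0") (auto simp: divide_le_eq_1)
qed

lemma det:
  fixes P :: "'v::finite \<Rightarrow> 'v \<Rightarrow> real" and Z :: "nat \<Rightarrow> 'v list \<Rightarrow> nat \<Rightarrow> 'a \<Rightarrow> real"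
  assumes H: "\<And>t s. t \<ge> T \<Longrightarrow> s \<in> paths P \<pi> t \<Longrightarrow> (\<Sum>k<t. \<bar>Z t s k \<omega>\<bar>) < R * real t"
  shows "\<exists>K. compact K \<and>
           limsup (\<lambda>t. eln (Qemp P \<pi> Z t \<omega> (- K)) / ereal (real t)) \<le> ereal (- c)"
proof -
  define B where "B = \<bar>R\<bar> + (\<Sum>t<T. \<Sum>s\<in>paths P \<pi> t. \<Sum>k<t. \<bar>Z t s k \<omega>\<bar>)"
  have B0: "B \<ge> 0" unfolding B_def by (intro add_nonneg_nonneg sum_nonneg) auto
  have Zb: "\<bar>Zemp Z \<omega> s $ i\<bar> \<le> B" if s: "s \<in> paths P \<pi> t" for t s i
  proof -
    have len: "length s = t" using s by (simp add: paths_def)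
    define S where "S = (\<Sum>k<t. \<bar>Z t s k \<omega>\<bar>)"
    have S0: "S \<ge> 0" unfolding S_def by (auto intro: sum_nonneg)
    have num: "\<bar>\<Sum>k\<in>{k. k < t \<and> s!k = i}. Z t s k \<omega>\<bar> \<le> S"
      unfolding S_def
      by (rule order.trans[OF sum_abs]) (rule sum_mono2, auto)
    show ?thesis
    proof (cases "t = 0")
      case True then show ?thesis using B0 by (simp add: Zemp_def len)
    next
      case False
      have e: "\<bar>Zemp Z \<omega> s $ i\<bar> = \<bar>\<Sum>k\<in>{k. k < t \<and> s!k = i}. Z t s k \<omega>\<bar> / real t"
        by (simp add: Zemp_def len)
      have "\<bar>Zemp Z \<omega> s $ i\<bar> \<le> S / real t" unfolding e using False
        by (intro divide_right_mono num) auto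
      also have "\<dots> \<le> B"
      proof (cases "t \<ge> T")
        case True
        have "S < R * real t" using H[OF True s] by (simp add: S_def)
        then have "S / real t < R" using False by (simp add: divide_less_eq mult.commute)
        then show ?thesis unfolding B_def
          by (smt (verit) sum_nonneg abs_ge_zero)
      next
        case False2: False
        have "S \<le> (\<Sum>s\<in>paths P \<pi> t. \<Sum>k<t. \<bar>Z t s k \<omega>\<bar>)"
          unfolding S_def by (rule member_le_sum[OF s _ finite_paths]) (auto intro: sum_nonneg)
        also have "\<dots> \<le> (\<Sum>t<T. \<Sum>s\<in>paths P \<pi> t. \<Sum>k<t. \<bar>Z t s k \<omega>\<bar>)"
          by (rule member_le_sum[of t]) (use False2 in \<open>auto intro!: sum_nonneg\<close>)
        finally have "S \<le> B - \<bar>R\<bar>" unfolding B_def by simp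
        moreover have "S / real t \<le> S" using False S0
          by (simp add: divide_le_eq) (metis mult_le_cancel_left1 of_nat_0_less_iff of_nat_1 of_nat_mono bot_nat_0.not_eq_extremum less_one not_le)
        ultimately show ?thesis by simp
      qed
      finally show ?thesis .
    qed
  qed
  define r where "r = real CARD('v \<times> 'v) + real CARD('v) * B"
  define K where "K = cball (0 :: (real^('v \<times> 'v)) \<times> (real^'v)) r"
  have inK: "(Theta s, Zemp Z \<omega> s) \<in> K" if s: "s \<in> paths P \<pi> t" for t s
  proof -
    have "norm (Theta s, Zemp Z \<omega> s) \<le> norm (Theta s) + norm (Zemp Z \<omega> s)" by (rule norm_Pair_le)
    also have "\<dots> \<le> (\<Sum>i\<in>UNIV. \<bar>Theta s $ i\<bar>) + (\<Sum>i\<in>UNIV. \<bar>Zemp Z \<omega> s $ i\<bar>)"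
      by (intro add_mono norm_le_l1_cart)
    also have "\<dots> \<le> (\<Sum>i\<in>(UNIV::('v\<times>'v) set). 1) + (\<Sum>i\<in>(UNIV::'v set). B)"
      by (intro add_mono sum_mono Theta_bound Zb[OF s])
    also have "\<dots> = r" by (simp add: r_def)
    finally show ?thesis by (simp add: K_def)
  qed
  have "Qemp P \<pi> Z t \<omega> (- K) = 0" for t
  proof -
    have "{s \<in> paths P \<pi> t. (Theta s, Zemp Z \<omega> s) \<in> - K} = {}" using inK by auto
    then show ?thesis unfolding Qemp_def by (simp only:) simp
  qed
  then have "(\<lambda>t. eln (Qemp P \<pi> Z t \<omega> (- K)) / ereal (real t)) = (\<lambda>t. -\<infinity>)"
    by (auto simp: eln_def fun_eq_iff divide_ereal_def)
  then have "limsup (\<lambda>t. eln (Qemp P \<pi> Z t \<omega> (- K)) / ereal (real t)) = -\<infinity>"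
    by (simp add: Limsup_const)
  moreover have "compact K" by (simp add: K_def)
  ultimately show ?thesis by auto
qed


theorem lemma7:
  fixes P :: "'v::finite \<Rightarrow> 'v \<Rightarrow> real" and \<pi> :: "'v \<Rightarrow> real"
    and M :: "'a measure" and Z :: "nat \<Rightarrow> 'v list \<Rightarrow> nat \<Rightarrow> 'a \<Rightarrow> real"
  assumes "row_stochastic P" and "irreducible_chain P" and "aperiodic_chain P"
    and "stationary_dist P \<pi>" and "\<forall>i. \<pi> i > 0"
    and "prob_space M"
    and "prob_space.indep_vars M (\<lambda>_. borel) (\<lambda>(t, s, k). Z t s k)
           {(t, s, k). s \<in> paths P \<pi> t \<and> k < t}"
    and "\<And>t s k. s \<in> paths P \<pi> t \<Longrightarrow> k < t \<Longrightarrow>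
           distributed M lborel (Z t s k) std_normal_density"
  shows "AE \<omega> in M. \<forall>c::real. \<exists>K. compact K \<and>
           limsup (\<lambda>t. eln (Qemp P \<pi> Z t \<omega> (- K)) / ereal (real t)) \<le> ereal (- c)"
proof -
  interpret prob_space M by fact
  note ind = assms(7) and D = assms(8)
  define C :: real where "C = 2 * exp (1/2)"
  define N :: real where "N = real CARD('v)"
  have C0: "C > 0" and N0: "N > 0" by (auto simp: C_def N_def)
  define R where "R = ln (N * C) + 1"
  define E where "E t s = {\<omega>\<in>space M. R * real t \<le> (\<Sum>k<t. \<bar>Z t s k \<omega>\<bar>)}" for t s
  define A where "A t = (\<Union>s\<in>paths P \<pi> t. E t s)" for t
  have measZ[measurable]: "Z t s k \<in> borel_measurable M" if "s \<in> paths P \<pi> t" "k < t" for t s k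
    using D[OF that] distributed_measurable by (metis measurable_lborel1)
  have E_sets: "E t s \<in> sets M" if "s \<in> paths P \<pi> t" for t s
  proof -
    have [measurable]: "(\<lambda>\<omega>. \<Sum>k<t. \<bar>Z t s k \<omega>\<bar>) \<in> borel_measurable M"
      using measZ[OF that] by (intro borel_measurable_sum borel_measurable_abs) auto
    show ?thesis unfolding E_def by measurable
  qed
  have A_sets: "A t \<in> sets M" for t
    unfolding A_def using E_sets finite_paths by (intro sets.finite_UN) auto
  have E_bound: "measure M (E t s) \<le> exp (- R * real t) * C ^ t" if s: "s \<in> paths P \<pi> t" for t s
  proof -
    define I where "I = (\<lambda>k. (t, s, k)) ` {..<t}"
    have inj: "inj_on (\<lambda>k. (t, s, k)) {..<t}" by (auto simp: inj_on_def)
    have indI: "indep_vars (\<lambda>_. borel) (\<lambda>(t, s, k). Z t s k) I"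
      by (rule indep_vars_subset[OF ind]) (auto simp: I_def s)
    have "emeasure M {\<omega>\<in>space M. R * real t \<le> (\<Sum>i\<in>I. \<bar>(\<lambda>(t, s, k). Z t s k) i \<omega>\<bar>)}
        \<le> ennreal (exp (- (R * real t)) * (2 * exp (1/2)) ^ card I)"
      by (rule gauss_tail[OF _ indI]) (auto simp: I_def intro!: D s)
    moreover have "(\<Sum>i\<in>I. \<bar>(\<lambda>(t, s, k). Z t s k) i \<omega>\<bar>) = (\<Sum>k<t. \<bar>Z t s k \<omega>\<bar>)" for \<omega>
      unfolding I_def by (subst sum.reindex[OF inj]) auto
    moreover have "card I = t" unfolding I_def using card_image[OF inj] by simp
    ultimately have "emeasure M (E t s) \<le> ennreal (exp (- R * real t) * C ^ t)"
      by (simp add: E_def C_def)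
    then show ?thesis using C0 by (simp add: emeasure_eq_measure ennreal_le_iff del: ennreal_le_iff2 mult_minus_left)
  qed
  have A_bound: "measure M (A t) \<le> exp (-1) ^ t" for t
  proof -
    have "measure M (A t) \<le> (\<Sum>s\<in>paths P \<pi> t. measure M (E t s))"
      unfolding A_def by (rule finite_measure_subadditive_finite) (auto simp: finite_paths E_sets)
    also have "\<dots> \<le> (\<Sum>s\<in>paths P \<pi> t. exp (- R * real t) * C ^ t)"
      by (rule sum_mono) (rule E_bound)
    also have "\<dots> = real (card (paths P \<pi> t)) * (exp (- R * real t) * C ^ t)" by simp
    also have "\<dots> \<le> N ^ t * (exp (- R * real t) * C ^ t)"
      using card_paths[of P \<pi> t] C0 unfolding N_def
      by (intro mult_right_mono) (auto simp flip: of_nat_power)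
    also have "\<dots> = exp (-1) ^ t"
    proof -
      have "N ^ t * C ^ t = exp (ln (N * C) * real t)"
        using N0 C0 by (simp add: exp_of_nat2_mult power_mult_distrib)
      then have "N ^ t * (exp (- R * real t) * C ^ t) = exp (ln (N * C) * real t + (- R * real t))"
        by (simp only: exp_add mult_ac) (metis mult.assoc mult.commute)
      also have "ln (N * C) * real t + (- R * real t) = real t * (-1)" by (simp add: R_def algebra_simps)
      also have "exp (real t * (-1)) = exp (-1) ^ t" by (rule exp_of_nat_mult)
      finally show ?thesis .
    qed
    finally show ?thesis .
  qed
  have summ: "summable (\<lambda>t. measure M (A t))"
    by (rule summable_comparison_test[of _ "\<lambda>t. exp (-1) ^ t"])
       (auto intro!: A_bound summable_geometric)
  have "AE \<omega> in M. eventually (\<lambda>t. \<omega> \<in> space M - A t) sequentially"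
    by (rule borel_cantelli_AE1) (auto simp: A_sets summ emeasure_eq_measure)
  then show ?thesis
  proof (rule AE_mp, intro AE_I2 impI allI)
    fix \<omega> c assume "\<omega> \<in> space M" and ev: "eventually (\<lambda>t. \<omega> \<in> space M - A t) sequentially"
    then obtain T where T: "\<And>t. t \<ge> T \<Longrightarrow> \<omega> \<in> space M - A t" by (auto simp: eventually_sequentially)
    show "\<exists>K. compact K \<and> limsup (\<lambda>t. eln (Qemp P \<pi> Z t \<omega> (- K)) / ereal (real t)) \<le> ereal (- c)"
    proof (rule det)
      fix t s assume "t \<ge> T" "s \<in> paths P \<pi> t"
      then show "(\<Sum>k<t. \<bar>Z t s k \<omega>\<bar>) < R * real t"
        using T[of t] by (auto simp: A_def E_def)
    qed
  qed
qed
end
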